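(* Let $v_1,\dots,v_m$ be distinct values and $X_1,\dots,X_n$ finite domain variables. Introduce variables $Y_1,\dots,Y_{n+1}$ with domains in $\{0,\dots,m\}$, $Y_1=0$, and for each $1\le i\le n$ the ternary constraint $D(X_i,Y_i,Y_{i+1})$ which holds iff $X_i\neq v_j$ for every $j>Y_i+1$, and $Y_{i+1}=Y_i+1$ if $X_i=v_{Y_i+1}$, and $Y_{i+1}=Y_i$ otherwise. Then (a) an assignment to $X_1,\dots,X_n$ satisfies $\mathrm{Precedence}([v_1,\dots,v_m],[X_1,\dots,X_n])$ iff it extends to an assignment of $Y_1,\dots,Y_{n+1}$ with $Y_1=0$ satisfying all $D(X_i,Y_i,Y_{i+1})$; and (b) if $D(Y_1)=\{0\}$ and every constraint $D(X_i,Y_i,Y_{i+1})$, $1\le i\le n$, is GAC (with all domains nonempty), then $\mathrm{Precedence}([v_1,\dots,v_m],[X_1,\dots,X_n])$ is GAC on the domains of $X_1,\dots,X_n$.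
   Context: A support of a constraint is an assignment of a value from its domain to each of its variables that satisfies it; a constraint is GAC iff every value in every variable's domain belongs to some support. For distinct values $a,b$, $\mathrm{Precedence}([a,b],[X_1,\dots,X_n])$ holds iff $\min\{i \mid X_i=a \text{ or } i=n+1\} < \min\{i \mid X_i=b \text{ or } i=n+2\}$; $\mathrm{Precedence}([v_1,\dots,v_m],[X_1,\dots,X_n])$ holds iff $\mathrm{Precedence}([v_i,v_{i+1}],[X_1,\dots,X_n])$ holds for all $1\le i<m$. *)

theory Defs
  imports Main
begin

(* Values v 1, ..., v m (indexed from 1); an assignment to X_1..X_n is a function x :: nat => 'a,
   of which only x 1, ..., x n matter. *)

definition prec_pair :: "'a \<Rightarrow> 'a \<Rightarrow> (nat \<Rightarrow> 'a) \<Rightarrow> nat \<Rightarrow> bool" where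
  "prec_pair a b x n \<longleftrightarrow>
     (LEAST i::nat. (1 \<le> i \<and> i \<le> n \<and> x i = a) \<or> i = n + 1)
   < (LEAST i::nat. (1 \<le> i \<and> i \<le> n \<and> x i = b) \<or> i = n + 2)"

definition precedence :: "(nat \<Rightarrow> 'a) \<Rightarrow> nat \<Rightarrow> (nat \<Rightarrow> 'a) \<Rightarrow> nat \<Rightarrow> bool" where
  "precedence v m x n \<longleftrightarrow> (\<forall>i. 1 \<le> i \<and> i < m \<longrightarrow> prec_pair (v i) (v (Suc i)) x n)"

(* The ternary constraint D(X_i, Y_i, Y_{i+1}); v_{y+1} is taken not to exist when y + 1 > m. *)
definition Dcon :: "(nat \<Rightarrow> 'a) \<Rightarrow> nat \<Rightarrow> 'a \<Rightarrow> nat \<Rightarrow> nat \<Rightarrow> bool" where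
  "Dcon v m a y y' \<longleftrightarrow>
     (\<forall>j. y + 1 < j \<and> j \<le> m \<longrightarrow> a \<noteq> v j) \<and>
     (if y + 1 \<le> m \<and> a = v (y + 1) then y' = y + 1 else y' = y)"

definition gac3 :: "('a \<Rightarrow> 'b \<Rightarrow> 'c \<Rightarrow> bool) \<Rightarrow> 'a set \<Rightarrow> 'b set \<Rightarrow> 'c set \<Rightarrow> bool" where
  "gac3 P A B C \<longleftrightarrow>
     (\<forall>a\<in>A. \<exists>b\<in>B. \<exists>c\<in>C. P a b c) \<and>
     (\<forall>b\<in>B. \<exists>a\<in>A. \<exists>c\<in>C. P a b c) \<and>
     (\<forall>c\<in>C. \<exists>a\<in>A. \<exists>b\<in>B. P a b c)"

definition gac :: "((nat \<Rightarrow> 'a) \<Rightarrow> bool) \<Rightarrow> nat \<Rightarrow> (nat \<Rightarrow> 'a set) \<Rightarrow> bool" where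
  "gac P n Dom \<longleftrightarrow>
     (\<forall>i\<in>{1..n}. \<forall>a\<in>Dom i. \<exists>x. (\<forall>k\<in>{1..n}. x k \<in> Dom k) \<and> x i = a \<and> P x)"

end

theory Submission
  imports Defs
begin

definition stepv :: "(nat \<Rightarrow> 'a) \<Rightarrow> nat \<Rightarrow> 'a \<Rightarrow> nat \<Rightarrow> nat" where
  "stepv v m a c = (if c + 1 \<le> m \<and> a = v (c+1) then c+1 else c)"

definition okv :: "(nat \<Rightarrow> 'a) \<Rightarrow> nat \<Rightarrow> 'a \<Rightarrow> nat \<Rightarrow> bool" where
  "okv v m a c \<longleftrightarrow> (\<forall>j. c + 1 < j \<and> j \<le> m \<longrightarrow> a \<noteq> v j)"

lemma Dcon_iff: "Dcon v m a c c' \<longleftrightarrow> okv v m a c \<and> c' = stepv v m a c"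
  unfolding Dcon_def okv_def stepv_def by auto

primrec R :: "(nat \<Rightarrow> 'a) \<Rightarrow> nat \<Rightarrow> (nat \<Rightarrow> 'a) \<Rightarrow> nat \<Rightarrow> nat" where
  "R v m x 0 = 0"
| "R v m x (Suc k) = stepv v m (x (Suc k)) (R v m x k)"

lemma R_le: "R v m x k \<le> m"
  by (induct k) (auto simp: stepv_def)

lemma R_inv:
  assumes inj: "inj_on v {1..m}"
    and ok: "\<forall>q\<in>{1..k}. okv v m (x q) (R v m x (q-1))"
  shows "\<forall>j\<in>{1..m}. (\<exists>q\<in>{1..k}. x q = v j) \<longleftrightarrow> j \<le> R v m x k"
  using ok
proof (induct k)
  case 0
  then show ?case by auto
next
  case (Suc k)
  have IH: "\<forall>j\<in>{1..m}. (\<exists>q\<in>{1..k}. x q = v j) \<longleftrightarrow> j \<le> R v m x k"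
  proof -
    have "\<forall>q\<in>{1..k}. okv v m (x q) (R v m x (q-1))" using Suc.prems by simp
    then show ?thesis by (rule Suc.hyps)
  qed
  have okk: "okv v m (x (Suc k)) (R v m x k)" using Suc.prems[rule_format, of "Suc k"] by simp
  have split: "\<And>j. (\<exists>q\<in>{1..Suc k}. x q = v j) \<longleftrightarrow> (\<exists>q\<in>{1..k}. x q = v j) \<or> x (Suc k) = v j"
  proof -
    fix j
    have "{1..Suc k} = insert (Suc k) {1..k}" by auto
    then show "(\<exists>q\<in>{1..Suc k}. x q = v j) \<longleftrightarrow> (\<exists>q\<in>{1..k}. x q = v j) \<or> x (Suc k) = v j" by auto
  qed
  show ?case
  proof (cases "R v m x k + 1 \<le> m \<and> x (Suc k) = v (R v m x k + 1)")
    case True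
    then have r: "R v m x (Suc k) = R v m x k + 1" by (simp add: stepv_def)
    show ?thesis
    proof
      fix j assume j: "j \<in> {1..m}"
      have "(x (Suc k) = v j) \<longleftrightarrow> j = R v m x k + 1"
      proof
        assume e: "x (Suc k) = v j"
        have "v j = v (R v m x k + 1)" using e True by simp
        moreover have "R v m x k + 1 \<in> {1..m}" using True by simp
        ultimately show "j = R v m x k + 1" using inj_onD[OF inj] j by blast
      next
        assume "j = R v m x k + 1"
        then show "x (Suc k) = v j" using True by simp
      qed
      then show "(\<exists>q\<in>{1..Suc k}. x q = v j) \<longleftrightarrow> j \<le> R v m x (Suc k)"
        using split[of j] IH j r by auto
    qed
  next
    case False
    then have r: "R v m x (Suc k) = R v m x k" by (auto simp: stepv_def)
    show ?thesis
    proof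
      fix j assume j: "j \<in> {1..m}"
      have "x (Suc k) = v j \<Longrightarrow> j \<le> R v m x k"
      proof -
        assume e: "x (Suc k) = v j"
        from okk e j have "j \<le> R v m x k + 1" unfolding okv_def by (metis atLeastAtMost_iff not_less)
        moreover have "j \<noteq> R v m x k + 1" using False e j by auto
        ultimately show ?thesis by simp
      qed
      then show "(\<exists>q\<in>{1..Suc k}. x q = v j) \<longleftrightarrow> j \<le> R v m x (Suc k)"
        using split[of j] IH j r by auto
    qed
  qed
qed

lemma prec_char:
  "prec_pair a b x n \<longleftrightarrow> (\<forall>p\<in>{1..n}. x p = b \<longrightarrow> (\<exists>k\<in>{1..<p}. x k = a))"
proof -
  define fa where "fa = (LEAST i::nat. (1 \<le> i \<and> i \<le> n \<and> x i = a) \<or> i = n + 1)"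
  define fb where "fb = (LEAST i::nat. (1 \<le> i \<and> i \<le> n \<and> x i = b) \<or> i = n + 2)"
  have fa1: "(1 \<le> fa \<and> fa \<le> n \<and> x fa = a) \<or> fa = n+1"
    unfolding fa_def by (rule LeastI[of _ "n+1"]) simp
  have fa2: "\<And>i. (1 \<le> i \<and> i \<le> n \<and> x i = a) \<or> i = n+1 \<Longrightarrow> fa \<le> i"
    unfolding fa_def by (rule Least_le)
  have fb1: "(1 \<le> fb \<and> fb \<le> n \<and> x fb = b) \<or> fb = n+2"
    unfolding fb_def by (rule LeastI[of _ "n+2"]) simp
  have fb2: "\<And>i. (1 \<le> i \<and> i \<le> n \<and> x i = b) \<or> i = n+2 \<Longrightarrow> fb \<le> i"
    unfolding fb_def by (rule Least_le)
  have e: "prec_pair a b x n \<longleftrightarrow> fa < fb" unfolding prec_pair_def fa_def fb_def ..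
  show ?thesis
  proof
    assume "prec_pair a b x n"
    then have lt: "fa < fb" using e by simp
    show "\<forall>p\<in>{1..n}. x p = b \<longrightarrow> (\<exists>k\<in>{1..<p}. x k = a)"
    proof (intro ballI impI)
      fix p assume p: "p \<in> {1..n}" and xp: "x p = b"
      have "fb \<le> p" using fb2[of p] p xp by auto
      then have "fa < p" using lt by simp
      then have "1 \<le> fa \<and> fa \<le> n \<and> x fa = a" using fa1 p by auto
      then show "\<exists>k\<in>{1..<p}. x k = a" using \<open>fa < p\<close> by (intro bexI[of _ fa]) auto
    qed
  next
    assume H: "\<forall>p\<in>{1..n}. x p = b \<longrightarrow> (\<exists>k\<in>{1..<p}. x k = a)"
    have "fa < fb"
    proof (cases "fb = n + 2")
      case True
      have "fa \<le> n + 1" using fa2[of "n+1"] by simp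
      then show ?thesis using True by simp
    next
      case False
      then have "1 \<le> fb \<and> fb \<le> n \<and> x fb = b" using fb1 by simp
      then obtain k where k: "k \<in> {1..<fb}" "x k = a" using H[rule_format, of fb] by auto
      then have "fa \<le> k" using fa2[of k] \<open>1 \<le> fb \<and> fb \<le> n \<and> x fb = b\<close> by auto
      then show ?thesis using k by auto
    qed
    then show "prec_pair a b x n" using e by simp
  qed
qed

definition Pat :: "(nat \<Rightarrow> 'a) \<Rightarrow> nat \<Rightarrow> (nat \<Rightarrow> 'a) \<Rightarrow> nat \<Rightarrow> bool" where
  "Pat v m x q \<longleftrightarrow> (\<forall>j. 2 \<le> j \<and> j \<le> m \<longrightarrow> x q = v j \<longrightarrow> (\<exists>k\<in>{1..<q}. x k = v (j-1)))"

lemma prec_iff: "precedence v m x n \<longleftrightarrow> (\<forall>q\<in>{1..n}. Pat v m x q)"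
proof
  assume H: "precedence v m x n"
  show "\<forall>q\<in>{1..n}. Pat v m x q"
    unfolding Pat_def
  proof (intro ballI allI impI)
    fix q j assume q: "q \<in> {1..n}" and j: "2 \<le> j \<and> j \<le> m" and e: "x q = v j"
    have "prec_pair (v (j-1)) (v (Suc (j-1))) x n"
    proof -
      have "1 \<le> j-1 \<and> j-1 < m" using j by arith
      then show ?thesis using H[unfolded precedence_def, rule_format, of "j-1"] by blast
    qed
    then show "\<exists>k\<in>{1..<q}. x k = v (j-1)" using q e j unfolding prec_char by auto
  qed
next
  assume H: "\<forall>q\<in>{1..n}. Pat v m x q"
  show "precedence v m x n"
    unfolding precedence_def prec_char
  proof (intro allI impI ballI)
    fix i p assume i: "1 \<le> i \<and> i < m" and p: "p \<in> {1..n}" and e: "x p = v (Suc i)"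
    have "Pat v m x p" using H p by auto
    then have "2 \<le> Suc i \<and> Suc i \<le> m \<longrightarrow> x p = v (Suc i) \<longrightarrow> (\<exists>k\<in>{1..<p}. x k = v (Suc i - 1))"
      unfolding Pat_def by blast
    then show "\<exists>k\<in>{1..<p}. x k = v i" using i e by simp
  qed
qed

lemma ok_pat:
  assumes inj: "inj_on v {1..m}" and q: "1 \<le> q"
    and prev: "\<forall>q'\<in>{1..<q}. okv v m (x q') (R v m x (q'-1))"
  shows "okv v m (x q) (R v m x (q-1)) \<longleftrightarrow> Pat v m x q"
proof -
  have prev': "\<forall>q'\<in>{1..q-1}. okv v m (x q') (R v m x (q'-1))" using prev q by auto
  note inv = R_inv[OF inj prev']
  have inv2: "\<And>j. 2 \<le> j \<Longrightarrow> j \<le> m \<Longrightarrow> (\<exists>k\<in>{1..<q}. x k = v (j-1)) \<longleftrightarrow> j - 1 \<le> R v m x (q-1)"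
  proof -
    fix j :: nat assume "2 \<le> j" "j \<le> m"
    then have "j - 1 \<in> {1..m}" by auto
    then have "(\<exists>k\<in>{1..q-1}. x k = v (j-1)) \<longleftrightarrow> j - 1 \<le> R v m x (q-1)" using inv by blast
    moreover have "(\<exists>k\<in>{1..<q}. x k = v (j-1)) \<longleftrightarrow> (\<exists>k\<in>{1..q-1}. x k = v (j-1))"
    proof -
      have "{1..<q} = {1..q-1}" using q by auto
      then show ?thesis by simp
    qed
    ultimately show "(\<exists>k\<in>{1..<q}. x k = v (j-1)) \<longleftrightarrow> j - 1 \<le> R v m x (q-1)" by simp
  qed
  show ?thesis
  proof
    assume o: "okv v m (x q) (R v m x (q-1))"
    show "Pat v m x q" unfolding Pat_def
    proof (intro allI impI)
      fix j assume j: "2 \<le> j \<and> j \<le> m" and e: "x q = v j"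
      have "\<not> (R v m x (q-1) + 1 < j)" using o e j unfolding okv_def by auto
      then show "\<exists>k\<in>{1..<q}. x k = v (j-1)" using inv2[of j] j by auto
    qed
  next
    assume P: "Pat v m x q"
    show "okv v m (x q) (R v m x (q-1))" unfolding okv_def
    proof (intro allI impI)
      fix j assume j: "R v m x (q-1) + 1 < j \<and> j \<le> m"
      show "x q \<noteq> v j"
      proof
        assume e: "x q = v j"
        have "\<exists>k\<in>{1..<q}. x k = v (j-1)" using P e j unfolding Pat_def by auto
        then have "j - 1 \<le> R v m x (q-1)" using inv2[of j] j by auto
        then show False using j by auto
      qed
    qed
  qed
qed

lemma ok_all_iff:
  assumes inj: "inj_on v {1..m}"
  shows "(\<forall>q\<in>{1..n}. okv v m (x q) (R v m x (q-1))) \<longleftrightarrow> (\<forall>q\<in>{1..n}. Pat v m x q)"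
proof
  assume H: "\<forall>q\<in>{1..n}. okv v m (x q) (R v m x (q-1))"
  show "\<forall>q\<in>{1..n}. Pat v m x q"
  proof
    fix q assume q: "q \<in> {1..n}"
    have pv: "\<forall>q'\<in>{1..<q}. okv v m (x q') (R v m x (q'-1))" using H q by auto
    show "Pat v m x q" using ok_pat[OF inj _ pv] H q by auto
  qed
next
  assume H: "\<forall>q\<in>{1..n}. Pat v m x q"
  have "\<And>q. q \<in> {1..n} \<longrightarrow> okv v m (x q) (R v m x (q-1))"
  proof -
    fix q
    show "q \<in> {1..n} \<longrightarrow> okv v m (x q) (R v m x (q-1))"
    proof (induct q rule: nat_less_induct)
      case (1 q)
      show ?case
      proof
        assume q: "q \<in> {1..n}"
        have pv: "\<forall>q'\<in>{1..<q}. okv v m (x q') (R v m x (q'-1))" using 1 q by auto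
        show "okv v m (x q) (R v m x (q-1))" using ok_pat[OF inj _ pv] H q by auto
      qed
    qed
  qed
  then show "\<forall>q\<in>{1..n}. okv v m (x q) (R v m x (q-1))" by blast
qed

lemma partA:
  assumes inj: "inj_on v {1..m}"
  shows "precedence v m x n \<longleftrightarrow>
            (\<exists>y :: nat \<Rightarrow> nat. y 1 = 0 \<and> (\<forall>i\<in>{1..n+1}. y i \<in> {0..m}) \<and>
               (\<forall>i\<in>{1..n}. Dcon v m (x i) (y i) (y (Suc i))))"
proof
  assume P: "precedence v m x n"
  then have ok: "\<forall>q\<in>{1..n}. okv v m (x q) (R v m x (q-1))"
    using ok_all_iff[OF inj] prec_iff by blast
  define y where "y = (\<lambda>i. R v m x (i-1))"
  have "\<forall>i\<in>{1..n}. Dcon v m (x i) (y i) (y (Suc i))"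
  proof
    fix i assume i: "i \<in> {1..n}"
    then obtain k where k: "i = Suc k" by (cases i) auto
    show "Dcon v m (x i) (y i) (y (Suc i))"
      unfolding Dcon_iff y_def using ok[rule_format, of i] i k by auto
  qed
  then show "\<exists>y :: nat \<Rightarrow> nat. y 1 = 0 \<and> (\<forall>i\<in>{1..n+1}. y i \<in> {0..m}) \<and>
               (\<forall>i\<in>{1..n}. Dcon v m (x i) (y i) (y (Suc i)))"
    by (intro exI[of _ y]) (auto simp: y_def R_le)
next
  assume "\<exists>y :: nat \<Rightarrow> nat. y 1 = 0 \<and> (\<forall>i\<in>{1..n+1}. y i \<in> {0..m}) \<and>
               (\<forall>i\<in>{1..n}. Dcon v m (x i) (y i) (y (Suc i)))"
  then obtain y :: "nat \<Rightarrow> nat" where y1: "y 1 = 0"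
    and D: "\<forall>i\<in>{1..n}. Dcon v m (x i) (y i) (y (Suc i))" by blast
  have yR: "k \<le> n \<Longrightarrow> y (Suc k) = R v m x k" for k
  proof (induct k)
    case 0 then show ?case using y1 by simp
  next
    case (Suc k)
    have "Dcon v m (x (Suc k)) (y (Suc k)) (y (Suc (Suc k)))" using D Suc.prems by auto
    then show ?case using Suc by (simp add: Dcon_iff)
  qed
  have "\<forall>q\<in>{1..n}. okv v m (x q) (R v m x (q-1))"
  proof
    fix q assume q: "q \<in> {1..n}"
    then obtain k where k: "q = Suc k" by (cases q) auto
    have "Dcon v m (x q) (y q) (y (Suc q))" using D q by auto
    then show "okv v m (x q) (R v m x (q-1))" using yR[of k] k q by (simp add: Dcon_iff)
  qed
  then show "precedence v m x n" using ok_all_iff[OF inj] prec_iff by blast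
qed


lemma fwd:
  assumes G: "\<forall>i\<in>{1..n}. gac3 P (DX i) (DY i) (DY (Suc i))"
  shows "j + d = n + 1 \<Longrightarrow> 1 \<le> j \<Longrightarrow> c \<in> DY j \<Longrightarrow>
    \<exists>x y. y j = c \<and> (\<forall>q\<in>{j..n}. x q \<in> DX q \<and> P (x q) (y q) (y (Suc q))) \<and> (\<forall>q\<in>{j..n+1}. y q \<in> DY q)"
proof (induct d arbitrary: j c)
  case 0
  then have j: "j = n+1" by simp
  show ?case using 0 j by (intro exI[of _ "\<lambda>_. undefined"] exI[of _ "\<lambda>_. c"]) auto
next
  case (Suc d)
  have jn: "j \<in> {1..n}" using Suc.prems by auto
  obtain a c' where a: "a \<in> DX j" "c' \<in> DY (Suc j)" "P a c c'"
    using G jn Suc.prems(3) unfolding gac3_def by blast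
  have "Suc j + d = n + 1" using Suc.prems by simp
  then obtain x y where xy: "y (Suc j) = c'"
    "\<forall>q\<in>{Suc j..n}. x q \<in> DX q \<and> P (x q) (y q) (y (Suc q))" "\<forall>q\<in>{Suc j..n+1}. y q \<in> DY q"
    using Suc.hyps[of "Suc j" c'] a(2) by auto
  have A: "\<forall>q\<in>{j..n}. (x(j:=a)) q \<in> DX q \<and> P ((x(j:=a)) q) ((y(j:=c)) q) ((y(j:=c)) (Suc q))"
  proof
    fix q assume q: "q \<in> {j..n}"
    show "(x(j:=a)) q \<in> DX q \<and> P ((x(j:=a)) q) ((y(j:=c)) q) ((y(j:=c)) (Suc q))"
    proof (cases "q = j")
      case True then show ?thesis using a xy(1) by simp
    next
      case False
      then have "q \<in> {Suc j..n}" using q by auto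
      then show ?thesis using xy(2) False by auto
    qed
  qed
  have B: "\<forall>q\<in>{j..n+1}. (y(j:=c)) q \<in> DY q"
  proof
    fix q assume q: "q \<in> {j..n+1}"
    show "(y(j:=c)) q \<in> DY q"
    proof (cases "q = j")
      case True then show ?thesis using Suc.prems(3) by simp
    next
      case False
      then have "q \<in> {Suc j..n+1}" using q by auto
      then show ?thesis using xy(3) False by auto
    qed
  qed
  have C: "(y(j:=c)) j = c" by simp
  from A B C show ?case by blast
qed

lemma bwd:
  assumes G: "\<forall>i\<in>{1..n}. gac3 P (DX i) (DY i) (DY (Suc i))"
  shows "1 \<le> j \<Longrightarrow> j \<le> n+1 \<Longrightarrow> c \<in> DY j \<Longrightarrow>
    \<exists>x y. y j = c \<and> (\<forall>q\<in>{1..<j}. x q \<in> DX q \<and> P (x q) (y q) (y (Suc q))) \<and> (\<forall>q\<in>{1..j}. y q \<in> DY q)"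
proof (induct j arbitrary: c)
  case 0 then show ?case by simp
next
  case (Suc j)
  show ?case
  proof (cases "j = 0")
    case True
    then show ?thesis using Suc.prems by (intro exI[of _ "\<lambda>_. undefined"] exI[of _ "\<lambda>_. c"]) auto
  next
    case False
    then have jn: "j \<in> {1..n}" using Suc.prems by auto
    obtain a b where ab: "a \<in> DX j" "b \<in> DY j" "P a b c"
      using G jn Suc.prems(3) unfolding gac3_def by blast
    obtain x y where xy: "y j = b"
      "\<forall>q\<in>{1..<j}. x q \<in> DX q \<and> P (x q) (y q) (y (Suc q))" "\<forall>q\<in>{1..j}. y q \<in> DY q"
      using Suc.hyps[of b] ab(2) jn by auto
    have A: "\<forall>q\<in>{1..<Suc j}. (x(j:=a)) q \<in> DX q \<and> P ((x(j:=a)) q) ((y(Suc j:=c)) q) ((y(Suc j:=c)) (Suc q))"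
    proof
      fix q assume q: "q \<in> {1..<Suc j}"
      show "(x(j:=a)) q \<in> DX q \<and> P ((x(j:=a)) q) ((y(Suc j:=c)) q) ((y(Suc j:=c)) (Suc q))"
      proof (cases "q = j")
        case True then show ?thesis using ab xy(1) by simp
      next
        case False
        then have "q \<in> {1..<j}" using q by auto
        then show ?thesis using xy(2) False by auto
      qed
    qed
    have B: "\<forall>q\<in>{1..Suc j}. (y(Suc j:=c)) q \<in> DY q"
    proof
      fix q assume q: "q \<in> {1..Suc j}"
      show "(y(Suc j:=c)) q \<in> DY q"
      proof (cases "q = Suc j")
        case True then show ?thesis using Suc.prems(3) by simp
      next
        case False
        then have "q \<in> {1..j}" using q by auto
        then show ?thesis using xy(3) False by auto
      qed
    qed
    have C: "(y(Suc j:=c)) (Suc j) = c" by simp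
    from A B C show ?thesis by blast
  qed
qed

theorem mainTheorem8:
  fixes v :: "nat \<Rightarrow> 'a" and m n :: nat
  assumes distinct: "inj_on v {1..m}"
  shows "(\<forall>x :: nat \<Rightarrow> 'a. precedence v m x n \<longleftrightarrow>
            (\<exists>y :: nat \<Rightarrow> nat. y 1 = 0 \<and> (\<forall>i\<in>{1..n+1}. y i \<in> {0..m}) \<and>
               (\<forall>i\<in>{1..n}. Dcon v m (x i) (y i) (y (Suc i)))))
       \<and> (\<forall>(DX :: nat \<Rightarrow> 'a set) (DY :: nat \<Rightarrow> nat set).
            (\<forall>i\<in>{1..n}. finite (DX i) \<and> DX i \<noteq> {}) \<longrightarrow>
            (\<forall>i\<in>{1..n+1}. DY i \<subseteq> {0..m} \<and> DY i \<noteq> {}) \<longrightarrow>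
            DY 1 = {0} \<longrightarrow>
            (\<forall>i\<in>{1..n}. gac3 (Dcon v m) (DX i) (DY i) (DY (Suc i))) \<longrightarrow>
            gac (\<lambda>x. precedence v m x n) n DX)"
proof (intro conjI allI impI)
  fix x :: "nat \<Rightarrow> 'a"
  show "precedence v m x n \<longleftrightarrow>
            (\<exists>y :: nat \<Rightarrow> nat. y 1 = 0 \<and> (\<forall>i\<in>{1..n+1}. y i \<in> {0..m}) \<and>
               (\<forall>i\<in>{1..n}. Dcon v m (x i) (y i) (y (Suc i))))"
    by (rule partA[OF distinct])
next
  fix DX :: "nat \<Rightarrow> 'a set" and DY :: "nat \<Rightarrow> nat set"
  assume H2: "\<forall>i\<in>{1..n+1}. DY i \<subseteq> {0..m} \<and> DY i \<noteq> {}"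
    and H3: "DY 1 = {0}"
    and H4: "\<forall>i\<in>{1..n}. gac3 (Dcon v m) (DX i) (DY i) (DY (Suc i))"
  show "gac (\<lambda>x. precedence v m x n) n DX" unfolding gac_def
  proof (intro ballI)
    fix i a assume i: "i \<in> {1..n}" and a: "a \<in> DX i"
    obtain b c where bc: "b \<in> DY i" "c \<in> DY (Suc i)" "Dcon v m a b c"
      using H4 i a unfolding gac3_def by blast
    obtain x1 y1 where xy1: "y1 i = b"
      "\<forall>q\<in>{1..<i}. x1 q \<in> DX q \<and> Dcon v m (x1 q) (y1 q) (y1 (Suc q))" "\<forall>q\<in>{1..i}. y1 q \<in> DY q"
      using bwd[OF H4, of i b] i bc(1) by auto
    have "Suc i + (n - i) = n + 1" using i by auto
    then obtain x2 y2 where xy2: "y2 (Suc i) = c"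
      "\<forall>q\<in>{Suc i..n}. x2 q \<in> DX q \<and> Dcon v m (x2 q) (y2 q) (y2 (Suc q))" "\<forall>q\<in>{Suc i..n+1}. y2 q \<in> DY q"
      using fwd[OF H4, of "Suc i" "n - i" c] bc(2) by auto
    define x where "x = (\<lambda>q. if q < i then x1 q else if q = i then a else x2 q)"
    define y where "y = (\<lambda>q. if q \<le> i then y1 q else y2 q)"
    have yDY: "\<forall>q\<in>{1..n+1}. y q \<in> DY q"
    proof
      fix q assume q: "q \<in> {1..n+1}"
      show "y q \<in> DY q"
      proof (cases "q \<le> i")
        case True then show ?thesis using xy1(3) q by (auto simp: y_def)
      next
        case False then show ?thesis using xy2(3) q by (auto simp: y_def)
      qed
    qed
    have y1': "y 1 = 0" using yDY H3 by auto
    have yr: "\<forall>q\<in>{1..n+1}. y q \<in> {0..m}" using yDY H2 by blast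
    have D: "\<forall>q\<in>{1..n}. x q \<in> DX q \<and> Dcon v m (x q) (y q) (y (Suc q))"
    proof
      fix q assume q: "q \<in> {1..n}"
      consider "q < i" | "q = i" | "i < q" by linarith
      then show "x q \<in> DX q \<and> Dcon v m (x q) (y q) (y (Suc q))"
      proof cases
        case 1
        then have "q \<in> {1..<i}" using q by auto
        then show ?thesis using xy1(2) 1 by (auto simp: x_def y_def)
      next
        case 2
        then show ?thesis using a bc xy1(1) xy2(1) by (auto simp: x_def y_def)
      next
        case 3
        then have "q \<in> {Suc i..n}" using q by auto
        then show ?thesis using xy2(2) 3 by (auto simp: x_def y_def)
      qed
    qed
    have "precedence v m x n"
      using partA[OF distinct, of x n] y1' yr D by blast
    then show "\<exists>x. (\<forall>k\<in>{1..n}. x k \<in> DX k) \<and> x i = a \<and> precedence v m x n"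
      using D by (intro exI[of _ x]) (auto simp: x_def)
  qed
qed

end
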